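(* Let $m\geq 4$ be an integer and let $G$ be an $m$-free digraph with at least one vertex. Define, for $v\in V(G)$ and $1\leq k\leq m-3$, $\alpha_k(v)=p_k(v)/s_k(v)$ and $\beta_k(v)=r'_k(v)/t_k(v)$ (with the conventions $a/0=+\infty$ for $a>0$ and $0/0=0$), and let $\alpha=\min_{v\in V(G),\,1\leq k\leq m-3}\alpha_k(v)$ and $\beta=\min_{v\in V(G),\,1\leq k\leq m-3}\beta_k(v)$. Then $\min\{\alpha,\beta\}\leq \frac{1}{m-2}$.
   Context: All digraphs are finite, without loops and without parallel edges. A digraph is $m$-free if it has no directed cycle of length at most $m$. For a vertex $v$ and $i\geq 0$, $N_i^+(v)$ is the set of vertices $u$ such that the shortest directed path from $v$ to $u$ has length exactly $i$. A directed path $(v_0,\dots,v_k)$ consists of distinct vertices with $(v_i,v_{i+1})$ an edge for each $i$; its length is $k$. It is induced if every edge of $G$ with both ends in $\{v_0,\dots,v_k\}$ is one of the edges $(v_i,v_{i+1})$; it is a shortest induced directed path if it is induced and $v_k\in N_k^+(v_0)$. Let $\mathscr{P}(G)$ be the set of shortest induced directed paths of $G$. For an integer $k\geq1$ and $v\in V(G)$: $P_k(v)$ (resp. $Q_k(v)$, $R_k(v)$) is the set of triples $(x,y,z)$ of vertices for which there exist vertices $w_1,\dots,w_k$ with $(x,w_1,\dots,w_k,y,z)\in\mathscr{P}(G)$ and $x=v$ (resp. $y=v$, $z=v$). $P'_k(v)$ (resp. $Q'_k(v)$, $R'_k(v)$) is the set of triples $(x,y,z)$ for which there exist $w_1,\dots,w_k$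 with $(x,y,w_1,\dots,w_k,z)\in\mathscr{P}(G)$ and $x=v$ (resp. $y=v$, $z=v$). Lowercase letters denote cardinalities: $p_k(v)=|P_k(v)|$, etc. For $1\leq k\leq m-3$: $s_k(v)=\sum_{i=k}^{m-3}p'_i(v)+\sum_{i=1}^{k}q'_i(v)$ and $t_k(v)=\sum_{i=k}^{m-3}r_i(v)+\sum_{i=1}^{k}q_i(v)$. *)

theory Defs
  imports "HOL-Library.Extended_Real"
begin

text \<open>A digraph is given by a finite vertex set V and an edge relation E \<subseteq> V \<times> V
  without loops (a relation automatically excludes parallel edges).\<close>

definition digraph :: "'a set \<Rightarrow> ('a \<times> 'a) set \<Rightarrow> bool" where
  "digraph V E \<longleftrightarrow> finite V \<and> E \<subseteq> V \<times> V \<and> (\<forall>v. (v, v) \<notin> E)"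

text \<open>A directed path (v_0,...,v_k) as a nonempty list of distinct vertices;
  its length is length xs - 1.\<close>
definition dpath :: "('a \<times> 'a) set \<Rightarrow> 'a list \<Rightarrow> bool" where
  "dpath E xs \<longleftrightarrow> xs \<noteq> [] \<and> distinct xs \<and>
     (\<forall>i. Suc i < length xs \<longrightarrow> (xs ! i, xs ! Suc i) \<in> E)"

definition dcycle :: "('a \<times> 'a) set \<Rightarrow> 'a list \<Rightarrow> bool" where
  "dcycle E cs \<longleftrightarrow> cs \<noteq> [] \<and> distinct cs \<and>
     (\<forall>i < length cs. (cs ! i, cs ! (Suc i mod length cs)) \<in> E)"

definition m_free :: "nat \<Rightarrow> ('a \<times> 'a) set \<Rightarrow> bool" where
  "m_free m E \<longleftrightarrow> \<not> (\<exists>cs. dcycle E cs \<and> length cs \<le> m)"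

definition Nout :: "'a set \<Rightarrow> ('a \<times> 'a) set \<Rightarrow> 'a \<Rightarrow> nat \<Rightarrow> 'a set" where
  "Nout V E v i = {u \<in> V. (\<exists>xs. dpath E xs \<and> hd xs = v \<and> last xs = u \<and> length xs = Suc i) \<and>
      \<not> (\<exists>xs. dpath E xs \<and> hd xs = v \<and> last xs = u \<and> length xs < Suc i)}"

definition induced_path :: "('a \<times> 'a) set \<Rightarrow> 'a list \<Rightarrow> bool" where
  "induced_path E xs \<longleftrightarrow> dpath E xs \<and>
     (\<forall>i < length xs. \<forall>j < length xs. (xs ! i, xs ! j) \<in> E \<longrightarrow> j = Suc i)"

definition SIP :: "'a set \<Rightarrow> ('a \<times> 'a) set \<Rightarrow> 'a list set" where
  "SIP V E = {xs. induced_path E xs \<and> last xs \<in> Nout V E (hd xs) (length xs - 1)}"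

definition Pk :: "'a set \<Rightarrow> ('a \<times> 'a) set \<Rightarrow> nat \<Rightarrow> 'a \<Rightarrow> ('a \<times> 'a \<times> 'a) set" where
  "Pk V E k v = {(x, y, z). \<exists>ws. length ws = k \<and> x # ws @ [y, z] \<in> SIP V E \<and> x = v}"
definition Qk :: "'a set \<Rightarrow> ('a \<times> 'a) set \<Rightarrow> nat \<Rightarrow> 'a \<Rightarrow> ('a \<times> 'a \<times> 'a) set" where
  "Qk V E k v = {(x, y, z). \<exists>ws. length ws = k \<and> x # ws @ [y, z] \<in> SIP V E \<and> y = v}"
definition Rk :: "'a set \<Rightarrow> ('a \<times> 'a) set \<Rightarrow> nat \<Rightarrow> 'a \<Rightarrow> ('a \<times> 'a \<times> 'a) set" where
  "Rk V E k v = {(x, y, z). \<exists>ws. length ws = k \<and> x # ws @ [y, z] \<in> SIP V E \<and> z = v}"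
definition Pk' :: "'a set \<Rightarrow> ('a \<times> 'a) set \<Rightarrow> nat \<Rightarrow> 'a \<Rightarrow> ('a \<times> 'a \<times> 'a) set" where
  "Pk' V E k v = {(x, y, z). \<exists>ws. length ws = k \<and> x # y # ws @ [z] \<in> SIP V E \<and> x = v}"
definition Qk' :: "'a set \<Rightarrow> ('a \<times> 'a) set \<Rightarrow> nat \<Rightarrow> 'a \<Rightarrow> ('a \<times> 'a \<times> 'a) set" where
  "Qk' V E k v = {(x, y, z). \<exists>ws. length ws = k \<and> x # y # ws @ [z] \<in> SIP V E \<and> y = v}"
definition Rk' :: "'a set \<Rightarrow> ('a \<times> 'a) set \<Rightarrow> nat \<Rightarrow> 'a \<Rightarrow> ('a \<times> 'a \<times> 'a) set" where
  "Rk' V E k v = {(x, y, z). \<exists>ws. length ws = k \<and> x # y # ws @ [z] \<in> SIP V E \<and> z = v}"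

definition s_k :: "nat \<Rightarrow> 'a set \<Rightarrow> ('a \<times> 'a) set \<Rightarrow> nat \<Rightarrow> 'a \<Rightarrow> nat" where
  "s_k m V E k v = (\<Sum>i=k..m-3. card (Pk' V E i v)) + (\<Sum>i=1..k. card (Qk' V E i v))"
definition t_k :: "nat \<Rightarrow> 'a set \<Rightarrow> ('a \<times> 'a) set \<Rightarrow> nat \<Rightarrow> 'a \<Rightarrow> nat" where
  "t_k m V E k v = (\<Sum>i=k..m-3. card (Rk V E i v)) + (\<Sum>i=1..k. card (Qk V E i v))"

definition ratio :: "nat \<Rightarrow> nat \<Rightarrow> ereal" where
  "ratio a b = (if b = 0 then (if a = 0 then 0 else \<infinity>) else ereal (real a / real b))"

definition alpha_k :: "nat \<Rightarrow> 'a set \<Rightarrow> ('a \<times> 'a) set \<Rightarrow> nat \<Rightarrow> 'a \<Rightarrow> ereal" where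
  "alpha_k m V E k v = ratio (card (Pk V E k v)) (s_k m V E k v)"
definition beta_k :: "nat \<Rightarrow> 'a set \<Rightarrow> ('a \<times> 'a) set \<Rightarrow> nat \<Rightarrow> 'a \<Rightarrow> ereal" where
  "beta_k m V E k v = ratio (card (Rk' V E k v)) (t_k m V E k v)"

definition alpha :: "nat \<Rightarrow> 'a set \<Rightarrow> ('a \<times> 'a) set \<Rightarrow> ereal" where
  "alpha m V E = Min {alpha_k m V E k v | k v. v \<in> V \<and> 1 \<le> k \<and> k \<le> m - 3}"
definition beta :: "nat \<Rightarrow> 'a set \<Rightarrow> ('a \<times> 'a) set \<Rightarrow> ereal" where
  "beta m V E = Min {beta_k m V E k v | k v. v \<in> V \<and> 1 \<le> k \<and> k \<le> m - 3}"

end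

theory Submission imports Defs begin
lemma ident: "(\<Sum>k=1..n. (\<Sum>i=k..n. f i) + (\<Sum>i=1..k. f i)) = Suc n * (\<Sum>i=1..n. (f::nat\<Rightarrow>nat) i)"
proof (induction n)
  case 0 then show ?case by simp
next
  case (Suc n)
  have "(\<Sum>k=1..Suc n. (\<Sum>i=k..Suc n. f i) + (\<Sum>i=1..k. f i))
      = (\<Sum>k=1..n. (\<Sum>i=k..Suc n. f i) + (\<Sum>i=1..k. f i)) + (f (Suc n) + (\<Sum>i=1..Suc n. f i))"
    by (simp add: sum.cl_ivl_Suc)
  also have "(\<Sum>k=1..n. (\<Sum>i=k..Suc n. f i) + (\<Sum>i=1..k. f i)) = (\<Sum>k=1..n. ((\<Sum>i=k..n. f i) + (\<Sum>i=1..k. f i)) + f (Suc n))"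
    by (rule sum.cong) (auto simp: sum.cl_ivl_Suc)
  also have "\<dots> = Suc n * (\<Sum>i=1..n. f i) + n * f (Suc n)"
    using Suc by (simp add: sum.distrib)
  finally show ?case by (simp add: sum.cl_ivl_Suc algebra_simps)
qed

lemma core: fixes a b :: "nat \<Rightarrow> nat" assumes "n \<ge> 1"
 "\<forall>k\<in>{1..n}. Suc n * a k > (\<Sum>i=k..n. b i) + (\<Sum>i=1..k. b i)"
 "\<forall>k\<in>{1..n}. Suc n * b k > (\<Sum>i=k..n. a i) + (\<Sum>i=1..k. a i)"
 shows False
proof -
  have ne: "{1..n} \<noteq> {}" using assms(1) by auto
  have "(\<Sum>k=1..n. (\<Sum>i=k..n. b i) + (\<Sum>i=1..k. b i)) < (\<Sum>k=1..n. Suc n * a k)"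
    by (rule sum_strict_mono) (use assms ne in auto)
  hence 1: "Suc n * sum b {1..n} < Suc n * sum a {1..n}" by (metis ident sum_distrib_left)
  have "(\<Sum>k=1..n. (\<Sum>i=k..n. a i) + (\<Sum>i=1..k. a i)) < (\<Sum>k=1..n. Suc n * b k)"
    by (rule sum_strict_mono) (use assms ne in auto)
  hence 2: "Suc n * sum a {1..n} < Suc n * sum b {1..n}" by (metis ident sum_distrib_left)
  from 1 2 show False by simp
qed

lemma count: "finite V \<Longrightarrow> finite T \<Longrightarrow> f ` T \<subseteq> V \<Longrightarrow> (\<Sum>v\<in>V. card {t\<in>T. f t = v}) = card T"
  using sum.group[of T V f "\<lambda>_. 1::nat"] by simp

lemma ratio_gt: assumes "ratio a b > ereal (1 / real c)" "c > 0" shows "c * a > b"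
proof (cases "b = 0")
  case True then show ?thesis using assms by (auto simp: ratio_def split: if_splits)
next
  case False
  hence "real a / real b > 1 / real c" using assms by (simp add: ratio_def)
  hence "real c * real a > real b" using False assms(2) by (simp add: field_simps)
  then show ?thesis by (metis of_nat_less_iff of_nat_mult)
qed

lemma dpath_set: assumes "dpath E xs" "E \<subseteq> V \<times> V" "length xs \<ge> 2" shows "set xs \<subseteq> V"
proof
  fix x assume "x \<in> set xs"
  then obtain j where j: "j < length xs" "xs ! j = x" by (auto simp: in_set_conv_nth)
  show "x \<in> V"
  proof (cases "Suc j < length xs")
    case True then show ?thesis using assms j by (auto simp: dpath_def)
  next
    case False
    then have "Suc (j - 1) < length xs" "Suc (j-1) = j" using j assms(3) by auto
    then show ?thesis using assms j unfolding dpath_def by (metis mem_Sigma_iff subsetD)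
  qed
qed

theorem lemma2p5:
  fixes V :: "'a set" and E :: "('a \<times> 'a) set" and m :: nat
  assumes "m \<ge> 4" and "digraph V E" and "m_free m E" and "V \<noteq> {}"
  shows "min (alpha m V E) (beta m V E) \<le> ereal (1 / (real m - 2))"
proof (rule ccontr)
  assume H: "\<not> ?thesis"
  define n where "n = m - 3"
  have n1: "n \<ge> 1" and mn: "m - 2 = Suc n" and m3: "m - 3 = n" using assms(1) n_def by auto
  have rm: "real m - 2 = real (Suc n)" using assms(1) n_def by auto
  have fin: "finite V" and EV: "E \<subseteq> V \<times> V" using assms(2) by (auto simp: digraph_def)
  define T where "T k = {(x,y,z). \<exists>ws. length ws = k \<and> x # ws @ [y, z] \<in> SIP V E}" for k
  define T' where "T' k = {(x,y,z). \<exists>ws. length ws = k \<and> x # y # ws @ [z] \<in> SIP V E}" for k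
  have sipV: "set xs \<subseteq> V" if "xs \<in> SIP V E" "length xs \<ge> 2" for xs
    using dpath_set[OF _ EV that(2)] that(1) by (auto simp: SIP_def induced_path_def)
  have TV: "T k \<subseteq> V \<times> V \<times> V" for k
  proof
    fix t assume "t \<in> T k"
    then obtain x y z ws where "t = (x,y,z)" "x # ws @ [y, z] \<in> SIP V E" unfolding T_def by auto
    with sipV[of "x # ws @ [y, z]"] show "t \<in> V \<times> V \<times> V" by auto
  qed
  have T'V: "T' k \<subseteq> V \<times> V \<times> V" for k
  proof
    fix t assume "t \<in> T' k"
    then obtain x y z ws where "t = (x,y,z)" "x # y # ws @ [z] \<in> SIP V E" unfolding T'_def by auto
    with sipV[of "x # y # ws @ [z]"] show "t \<in> V \<times> V \<times> V" by auto
  qed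
  have finV3: "finite (V \<times> V \<times> V)" using fin by auto
  have fT: "finite (T k)" "finite (T' k)" for k using TV T'V finV3 finite_subset by metis+
  have eqs: "Pk V E k v = {t\<in>T k. fst t = v}" "Qk V E k v = {t\<in>T k. fst (snd t) = v}"
    "Rk V E k v = {t\<in>T k. snd (snd t) = v}"
    "Pk' V E k v = {t\<in>T' k. fst t = v}" "Qk' V E k v = {t\<in>T' k. fst (snd t) = v}"
    "Rk' V E k v = {t\<in>T' k. snd (snd t) = v}" for k v
    unfolding Pk_def Qk_def Rk_def Pk'_def Qk'_def Rk'_def T_def T'_def by auto
  have cnt: "(\<Sum>v\<in>V. card (Pk V E k v)) = card (T k)" "(\<Sum>v\<in>V. card (Qk V E k v)) = card (T k)"
    "(\<Sum>v\<in>V. card (Rk V E k v)) = card (T k)"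
    "(\<Sum>v\<in>V. card (Pk' V E k v)) = card (T' k)" "(\<Sum>v\<in>V. card (Qk' V E k v)) = card (T' k)"
    "(\<Sum>v\<in>V. card (Rk' V E k v)) = card (T' k)" for k
    unfolding eqs using TV[of k] T'V[of k] fT[of k]
    by (auto intro!: count[OF fin] )
  define SA where "SA = {alpha_k m V E k v | k v. v \<in> V \<and> 1 \<le> k \<and> k \<le> m - 3}"
  define SB where "SB = {beta_k m V E k v | k v. v \<in> V \<and> 1 \<le> k \<and> k \<le> m - 3}"
  have SAe: "SA = (\<lambda>(k,v). alpha_k m V E k v) ` ({1..m-3} \<times> V)" unfolding SA_def by force
  have SBe: "SB = (\<lambda>(k,v). beta_k m V E k v) ` ({1..m-3} \<times> V)" unfolding SB_def by force
  have ne: "{1..m-3} \<times> V \<noteq> {}" using assms(4) n1 m3 by auto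
  have fA: "finite SA" "SA \<noteq> {}" "finite SB" "SB \<noteq> {}" unfolding SAe SBe using fin ne by auto
  from H have "ereal (1 / real (Suc n)) < Min SA" "ereal (1 / real (Suc n)) < Min SB"
    unfolding alpha_def beta_def SA_def[symmetric] SB_def[symmetric] rm by (simp_all add: not_le min_le_iff_disj del: of_nat_Suc)
  hence A: "\<forall>a\<in>SA. ereal (1 / real (Suc n)) < a" and B: "\<forall>a\<in>SB. ereal (1 / real (Suc n)) < a"
    using Min_gr_iff fA by blast+
  have pa: "Suc n * card (Pk V E k v) > s_k m V E k v" if "v \<in> V" "k \<in> {1..n}" for k v
  proof -
    have "alpha_k m V E k v \<in> SA" unfolding SA_def using that m3 by auto
    with A show ?thesis unfolding alpha_k_def by (intro ratio_gt) auto
  qed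
  have pb: "Suc n * card (Rk' V E k v) > t_k m V E k v" if "v \<in> V" "k \<in> {1..n}" for k v
  proof -
    have "beta_k m V E k v \<in> SB" unfolding SB_def using that m3 by auto
    with B show ?thesis unfolding beta_k_def by (intro ratio_gt) auto
  qed
  show False
  proof (rule core[OF n1, of "\<lambda>k. card (T k)" "\<lambda>k. card (T' k)"])
    show "\<forall>k\<in>{1..n}. Suc n * card (T k) > (\<Sum>i=k..n. card (T' i)) + (\<Sum>i=1..k. card (T' i))"
    proof
      fix k assume k: "k \<in> {1..n}"
      have "(\<Sum>v\<in>V. s_k m V E k v) < (\<Sum>v\<in>V. Suc n * card (Pk V E k v))"
        by (rule sum_strict_mono) (use fin assms(4) pa k in auto)
      also have "\<dots> = Suc n * (\<Sum>v\<in>V. card (Pk V E k v))" by (rule sum_distrib_left[symmetric])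
      also have "\<dots> = Suc n * card (T k)" by (simp only: cnt)
      also have "(\<Sum>v\<in>V. s_k m V E k v) = (\<Sum>v\<in>V. \<Sum>i=k..n. card (Pk' V E i v)) + (\<Sum>v\<in>V. \<Sum>i=1..k. card (Qk' V E i v))"
        unfolding s_k_def m3 by (rule sum.distrib)
      also have "\<dots> = (\<Sum>i=k..n. \<Sum>v\<in>V. card (Pk' V E i v)) + (\<Sum>i=1..k. \<Sum>v\<in>V. card (Qk' V E i v))"
        by (rule arg_cong2[where f="(+)"], rule sum.swap[where g="\<lambda>v i. card (Pk' V E i v)"], rule sum.swap[where g="\<lambda>v i. card (Qk' V E i v)"])
      also have "\<dots> = (\<Sum>i=k..n. card (T' i)) + (\<Sum>i=1..k. card (T' i))" by (simp only: cnt)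
      finally show "Suc n * card (T k) > (\<Sum>i=k..n. card (T' i)) + (\<Sum>i=1..k. card (T' i))" .
    qed
    show "\<forall>k\<in>{1..n}. Suc n * card (T' k) > (\<Sum>i=k..n. card (T i)) + (\<Sum>i=1..k. card (T i))"
    proof
      fix k assume k: "k \<in> {1..n}"
      have "(\<Sum>v\<in>V. t_k m V E k v) < (\<Sum>v\<in>V. Suc n * card (Rk' V E k v))"
        by (rule sum_strict_mono) (use fin assms(4) pb k in auto)
      also have "\<dots> = Suc n * (\<Sum>v\<in>V. card (Rk' V E k v))" by (rule sum_distrib_left[symmetric])
      also have "\<dots> = Suc n * card (T' k)" by (simp only: cnt)
      also have "(\<Sum>v\<in>V. t_k m V E k v) = (\<Sum>v\<in>V. \<Sum>i=k..n. card (Rk V E i v)) + (\<Sum>v\<in>V. \<Sum>i=1..k. card (Qk V E i v))"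
        unfolding t_k_def m3 by (rule sum.distrib)
      also have "\<dots> = (\<Sum>i=k..n. \<Sum>v\<in>V. card (Rk V E i v)) + (\<Sum>i=1..k. \<Sum>v\<in>V. card (Qk V E i v))"
        by (rule arg_cong2[where f="(+)"], rule sum.swap[where g="\<lambda>v i. card (Rk V E i v)"], rule sum.swap[where g="\<lambda>v i. card (Qk V E i v)"])
      also have "\<dots> = (\<Sum>i=k..n. card (T i)) + (\<Sum>i=1..k. card (T i))" by (simp only: cnt)
      finally show "Suc n * card (T' k) > (\<Sum>i=k..n. card (T i)) + (\<Sum>i=1..k. card (T i))" .
    qed
  qed
qed

end
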